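(* Let $p$ be a prime and $1\le r\leq s$ integers, and let $\varepsilon(r,s,p)=(\varepsilon_1,\dots,\varepsilon_r)$. Then $|\varepsilon_i|\leq r-1$ for $1\leq i\leq r$.
   Context: For a positive integer $n$, let $J_n$ denote the $n\times n$ matrix with $1$s in positions $(i,i)$ for $1\le i\le n$ and $(i,i+1)$ for $1\le i<n$, and $0$s elsewhere. For $1\le r\le s$, the Jordan canonical form of $J_r\otimes J_s$ over a field of characteristic $p$ is $J_{\lambda_1}\oplus\cdots\oplus J_{\lambda_r}$ with $\lambda_1\ge\cdots\ge\lambda_r>0$; write $\lambda(r,s,p)=(\lambda_1,\dots,\lambda_r)$. The deviation vector is $\varepsilon(r,s,p)=(\lambda_1-s,\dots,\lambda_r-s)$. *)

theory Defs
  imports "Jordan_Normal_Form.Jordan_Normal_Form"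
begin

definition kron_mat :: "'a :: times mat \<Rightarrow> 'a mat \<Rightarrow> 'a mat" where
  "kron_mat A B = mat (dim_row A * dim_row B) (dim_col A * dim_col B)
     (\<lambda>(i,j). A $$ (i div dim_row B, j div dim_col B) * B $$ (i mod dim_row B, j mod dim_col B))"

definition J :: "nat \<Rightarrow> 'a :: {zero,one} mat" where
  "J n = jordan_block n 1"

end

theory Submission
  imports Defs "Jordan_Normal_Form.Jordan_Normal_Form_Uniqueness" "HOL-Computational_Algebra.Formal_Power_Series"
begin

lemma kernel_dim_ge:
  fixes C :: "'a::field mat" and w :: "'b \<Rightarrow> 'a vec"
  assumes C: "C \<in> carrier_mat n n"
  and w: "\<And>k. k \<in> K \<Longrightarrow> w k \<in> carrier_vec n \<and> C *\<^sub>v w k = 0\<^sub>v n"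
  and fin: "finite K" and inj: "inj_on w K"
  and li: "\<And>c. (\<And>i. i < n \<Longrightarrow> (\<Sum>k\<in>K. c k * w k $ i) = 0) \<Longrightarrow> (\<forall>k\<in>K. c k = 0)"
  shows "card K \<le> kernel_dim C"
proof -
  interpret kernel n n C by (unfold_locales, rule C)
  let ?V = "w ` K"
  have Vk: "?V \<subseteq> mat_kernel C" using w C by (auto intro!: mat_kernelI)
  have Vc: "?V \<subseteq> carrier_vec n" using w by auto
  have "NC.lin_indpt ?V"
  proof
    assume "NC.lin_dep ?V"
    then obtain U a v where U: "finite U" "U \<subseteq> ?V" "NC.lincomb a U = 0\<^sub>v n" "v \<in> U" "a v \<noteq> 0"
      unfolding NC.lin_dep_def by auto
    define c where "c k = (if w k \<in> U then a (w k) else 0)" for k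
    have "\<forall>k\<in>K. c k = 0"
    proof (rule li)
      fix i assume i: "i < n"
      have "(\<Sum>k\<in>K. c k * w k $ i) = (\<Sum>k\<in>{k\<in>K. w k \<in> U}. a (w k) * w k $ i)"
        unfolding c_def by (rule sum.mono_neutral_cong_right, insert fin, auto)
      also have "\<dots> = (\<Sum>x\<in>U. a x * x $ i)"
      proof (rule sum.reindex_bij_betw)
        show "bij_betw w {k \<in> K. w k \<in> U} U" using U(2) inj
          unfolding bij_betw_def inj_on_def by auto
      qed
      also have "\<dots> = NC.lincomb a U $ i"
        by (rule NC.lincomb_index[symmetric, OF i], insert U Vc, auto)
      also have "\<dots> = 0" using U i by simp
      finally show "(\<Sum>k\<in>K. c k * w k $ i) = 0" .
    qed
    moreover from U obtain k where "k \<in> K" "v = w k" by auto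
    ultimately show False using U unfolding c_def by auto
  qed
  hence li2: "Ker.lin_indpt ?V" using lindep_same[OF Vk] by simp
  from kernel_basis_exists[OF C] obtain B where "finite B" "Ker.basis B" by auto
  hence fd: "Ker.fin_dim" unfolding Ker.fin_dim_def Ker.basis_def by auto
  from Ker.li_le_dim(2)[OF fd Vk li2] have "card ?V \<le> dim" .
  moreover have "card ?V = card K" using card_image[OF inj] .
  ultimately show ?thesis by simp
qed

lemma kernel_dim_le:
  fixes C :: "'a::field mat" and \<sigma> :: "nat \<Rightarrow> nat"
  assumes C: "C \<in> carrier_mat n n"
  and sig: "\<And>i. i < m \<Longrightarrow> \<sigma> i < n"
  and det: "\<And>v. v \<in> carrier_vec n \<Longrightarrow> C *\<^sub>v v = 0\<^sub>v n \<Longrightarrow> (\<And>i. i < m \<Longrightarrow> v $ \<sigma> i = 0) \<Longrightarrow> v = 0\<^sub>v n"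
  shows "kernel_dim C \<le> m"
proof (rule ccontr)
  assume contra: "\<not> kernel_dim C \<le> m"
  interpret kernel n n C by (unfold_locales, rule C)
  interpret NM: vec_space "TYPE('a)" m .
  from kernel_basis_exists[OF C] obtain B where finB: "finite B" and bas: "Ker.basis B" by auto
  have dimB: "dim = card B" by (rule Ker.dim_basis[OF finB bas])
  have Bk: "B \<subseteq> mat_kernel C" using bas unfolding Ker.basis_def by auto
  have liB: "Ker.lin_indpt B" using bas unfolding Ker.basis_def by auto
  have Bc: "B \<subseteq> carrier_vec n" using Bk mat_kernel_def C by auto
  define \<phi> where "\<phi> v = vec m (\<lambda>i. v $ \<sigma> i)" for v :: "'a vec"
  have inj: "inj_on \<phi> B"
  proof
    fix x y assume x: "x \<in> B" and y: "y \<in> B" and eq: "\<phi> x = \<phi> y"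
    have xc: "x \<in> carrier_vec n" and yc: "y \<in> carrier_vec n" using x y Bc by auto
    have "C *\<^sub>v x = 0\<^sub>v n" "C *\<^sub>v y = 0\<^sub>v n" using x y Bk mat_kernelD[OF C] by auto
    hence "C *\<^sub>v (x - y) = 0\<^sub>v n" using mult_minus_distrib_mat_vec[OF C xc yc] by simp
    moreover have "\<And>i. i < m \<Longrightarrow> (x - y) $ \<sigma> i = 0"
    proof -
      fix i assume i: "i < m"
      from arg_cong[OF eq, of "\<lambda>v. v $ i"] i have "x $ \<sigma> i = y $ \<sigma> i" unfolding \<phi>_def by auto
      thus "(x - y) $ \<sigma> i = 0" using sig[OF i] xc yc by auto
    qed
    ultimately have "x - y = 0\<^sub>v n" using det[of "x - y"] xc yc by auto
    show "x = y"
    proof (rule eq_vecI)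
      fix i assume i: "i < dim_vec y"
      from arg_cong[OF \<open>x - y = 0\<^sub>v n\<close>, of "\<lambda>v. v $ i"] i xc yc show "x $ i = y $ i" by auto
    qed (insert xc yc, auto)
  qed
  have PB: "\<phi> ` B \<subseteq> carrier_vec m" unfolding \<phi>_def by auto
  have "card (\<phi> ` B) > m" using card_image[OF inj] contra dimB by simp
  hence "NM.lin_dep (\<phi> ` B)" using NM.li_le_dim(2)[OF NM.fin_dim PB] NM.dim_is_n by force
  then obtain U a v where U: "finite U" "U \<subseteq> \<phi> ` B" "NM.lincomb a U = 0\<^sub>v m" "v \<in> U" "a v \<noteq> 0"
    unfolding NM.lin_dep_def by auto
  define U' where "U' = {x\<in>B. \<phi> x \<in> U}"
  define a' where "a' x = a (\<phi> x)" for x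
  have U'B: "U' \<subseteq> B" and finU': "finite U'" using finB unfolding U'_def by auto
  have U'k: "U' \<subseteq> mat_kernel C" using U'B Bk by auto
  let ?y = "lincomb a' U'"
  have yk: "?y \<in> mat_kernel C" by (rule Ker.lincomb_closed, insert U'k, auto)
  have yc: "?y \<in> carrier_vec n" using yk mat_kernel_def C by auto
  have y0: "?y = 0\<^sub>v n"
  proof (rule det[OF yc])
    show "C *\<^sub>v ?y = 0\<^sub>v n" using yk mat_kernelD[OF C] by auto
    fix i assume i: "i < m"
    have "?y $ \<sigma> i = (\<Sum>x\<in>U'. a' x * x $ \<sigma> i)" by (rule lincomb_index[OF sig[OF i] U'k])
    also have "\<dots> = (\<Sum>x\<in>U'. (\<lambda>u. a u * u $ i) (\<phi> x))"
      by (rule sum.cong, auto simp: a'_def \<phi>_def i)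
    also have "\<dots> = (\<Sum>u\<in>U. a u * u $ i)"
    proof (rule sum.reindex_bij_betw)
      show "bij_betw \<phi> U' U" using U(2) inj U'B unfolding bij_betw_def inj_on_def U'_def by auto
    qed
    also have "\<dots> = NM.lincomb a U $ i"
      by (rule NM.lincomb_index[symmetric, OF i], insert U PB, auto)
    also have "\<dots> = 0" using U i by simp
    finally show "?y $ \<sigma> i = 0" .
  qed
  from U obtain v' where v': "v' \<in> B" "v = \<phi> v'" by auto
  have "Ker.lin_dep B" unfolding Ker.lin_dep_def
    by (intro exI[of _ U'] exI[of _ a'] exI[of _ v'], insert finU' U'B y0 v' U, auto simp: U'_def a'_def)
  with liB show False by simp
qed


definition Xf :: "'a::comm_ring_1 fps fps" where "Xf = fps_const fps_X"
definition Uf :: "'a::comm_ring_1 fps fps" where "Uf = Xf + fps_X + Xf * fps_X"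

abbreviation cf :: "'a fps fps \<Rightarrow> nat \<Rightarrow> nat \<Rightarrow> 'a" where "cf P b a \<equiv> fps_nth (fps_nth P b) a"

lemma nth2: "cf (C * P) b a = (\<Sum>i=0..b. \<Sum>k=0..a. cf C i k * cf P (b-i) (a-k))"
  by (simp add: fps_mult_nth fps_sum_nth)

lemma Uf_nth: "cf (Uf * P) b a = (if a>0 then cf P b (a-1) else 0) + 
  (if b>0 then cf P (b-1) a + (if a>0 then cf P (b-1) (a-1) else 0) else 0)"
  unfolding Uf_def Xf_def
  by (simp add: algebra_simps fps_mult_left_const_nth fps_X_mult_nth)

definition boxeq :: "nat \<Rightarrow> nat \<Rightarrow> 'a::comm_ring_1 fps fps \<Rightarrow> 'a fps fps \<Rightarrow> bool" where
  "boxeq r s P Q \<longleftrightarrow> (\<forall>a<r. \<forall>b<s. cf P b a = cf Q b a)"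

lemma box_mult: "boxeq r s P Q \<Longrightarrow> boxeq r s (C*P) (C*Q)"
  unfolding boxeq_def nth2 by (auto intro!: sum.cong)

lemma box_sym: "boxeq r s P Q \<Longrightarrow> boxeq r s Q P" unfolding boxeq_def by auto
lemma box_trans: "boxeq r s P Q \<Longrightarrow> boxeq r s Q R \<Longrightarrow> boxeq r s P R" unfolding boxeq_def by auto
lemma box_add: "boxeq r s P 0 \<Longrightarrow> boxeq r s Q 0 \<Longrightarrow> boxeq r s (P + Q) 0" unfolding boxeq_def by auto

lemma box_X: "boxeq r s (Xf^r * P) 0"
  unfolding boxeq_def Xf_def fps_const_power by (simp add: fps_mult_left_const_nth fps_X_power_mult_nth)

lemma box_Y: "boxeq r s (fps_X^s * P) 0"
  unfolding boxeq_def by (simp add: fps_X_power_mult_nth)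

lemma box_zero_mult: "boxeq r s P 0 \<Longrightarrow> boxeq r s (C*P) 0"
  using box_mult[of r s P 0 C] by simp

lemma box_diff: "boxeq r s P 0 \<Longrightarrow> boxeq r s Q 0 \<Longrightarrow> boxeq r s (P - Q) 0" unfolding boxeq_def by auto

lemma Uf_pow_deg: "a + b < n \<Longrightarrow> cf (Uf^n) b a = 0"
proof (induction n arbitrary: a b)
  case (Suc n)
  show ?case unfolding power_Suc Uf_nth using Suc by auto
qed simp

lemma Uf_nilp: assumes "1 \<le> r" "1 \<le> s" shows "boxeq r s (Uf^(r+s-1) * P) 0"
  unfolding boxeq_def nth2 using assms by (auto intro!: sum.neutral simp: Uf_pow_deg)

lemma Uf_fps_nth: "fps_nth (Uf * P) b = fps_X * fps_nth P b + (if b = 0 then 0 else (1+fps_X) * fps_nth P (b-1))"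
proof -
  have eq: "Uf = fps_const fps_X + fps_const (1+fps_X) * fps_X" unfolding Uf_def Xf_def
    by (simp add: algebra_simps fps_const_add[symmetric])
  have "Uf * P = fps_const fps_X * P + fps_const (1+fps_X) * (fps_X * P)"
    unfolding eq by (simp add: algebra_simps)
  thus ?thesis by (simp add: fps_mult_left_const_nth fps_X_mult_nth)
qed

lemma Uf_pow_hi: "b > n \<Longrightarrow> fps_nth (Uf^n) b = 0"
proof (induction n arbitrary: b)
  case 0 thus ?case by simp
next
  case (Suc n) thus ?case unfolding power_Suc Uf_fps_nth by auto
qed

lemma Uf_pow_top: "fps_nth (Uf^n) n = (1 + fps_X)^n"
proof (induction n)
  case 0 thus ?case by simp
next
  case (Suc n) thus ?case unfolding power_Suc Uf_fps_nth by (auto simp: Uf_pow_hi)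
qed

lemma Xf_pow_nth: "fps_nth (Xf^i * Q) b = fps_X^i * fps_nth Q b"
  unfolding Xf_def fps_const_power by (simp add: fps_mult_left_const_nth)

lemma of_nat_fps_nth: "fps_nth (of_nat c * Q) b = of_nat c * fps_nth Q b"
  by (metis fps_mult_left_const_nth fps_of_nat)

definition Bp :: "nat \<Rightarrow> nat \<Rightarrow> 'a::comm_ring_1 fps fps" where
  "Bp r s = (\<Sum>i<r. of_nat (s choose i) * (-Xf)^i * Uf^(r-1-i))"

lemma Bp_coef: "of_nat c * (-Xf)^i = (fps_const (of_nat c * (-fps_X)^i) :: 'a::comm_ring_1 fps fps)"
  unfolding Xf_def by (simp add: fps_of_nat[symmetric])

lemma Bp_nth: "fps_nth (Bp r s) b = (\<Sum>i<r. of_nat (s choose i) * (-fps_X)^i * fps_nth (Uf^(r-1-i)) b)"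
  unfolding Bp_def fps_sum_nth Bp_coef by (simp add: fps_mult_left_const_nth)

lemma Bp_hi: "b > r - 1 \<Longrightarrow> fps_nth (Bp r s) b = 0"
  unfolding Bp_nth by (intro sum.neutral, auto simp: Uf_pow_hi)

lemma Bp_top: "fps_nth (Bp (Suc m) s :: 'a::comm_ring_1 fps fps) m = (1+fps_X)^m"
proof -
  have "fps_nth (Bp (Suc m) s :: 'a fps fps) m = (\<Sum>i\<in>{0}. of_nat (s choose i) * (-fps_X)^i * fps_nth ((Uf :: 'a fps fps)^(Suc m-1-i)) m)"
    unfolding Bp_nth
  proof (intro sum.mono_neutral_right)
    show "\<forall>i\<in>{..<Suc m} - {0}. of_nat (s choose i) * (-fps_X)^i * fps_nth ((Uf :: 'a fps fps)^(Suc m-1-i)) m = 0"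
    proof
      fix i assume "i \<in> {..<Suc m} - {0}"
      hence "fps_nth ((Uf :: 'a fps fps)^(Suc m-1-i)) m = 0" by (intro Uf_pow_hi, auto)
      thus "of_nat (s choose i) * (-fps_X)^i * fps_nth ((Uf :: 'a fps fps)^(Suc m-1-i)) m = 0" by simp
    qed
  qed auto
  thus ?thesis by (simp add: Uf_pow_top)
qed

definition Wv :: "nat \<Rightarrow> nat \<Rightarrow> nat \<Rightarrow> nat \<Rightarrow> 'a::comm_ring_1 fps fps" where
  "Wv r s a c = Bp r s * Xf^a * fps_X^c"

lemma Wv_nth: "fps_nth (Wv r s a c) b = (if b < c then 0 else fps_X^a * fps_nth (Bp r s) (b-c))"
proof -
  have eq: "Wv r s a c = fps_X^c * (Xf^a * Bp r s)" unfolding Wv_def by (simp add: algebra_simps)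
  show ?thesis unfolding eq by (simp add: fps_X_power_mult_nth Xf_pow_nth)
qed

lemma Wv_hi: "b > c + (r - 1) \<Longrightarrow> cf (Wv r s a c) b a' = 0"
  unfolding Wv_nth by (auto simp: Bp_hi)

lemma Wv_top: 
  shows "cf (Wv (Suc m) s a c :: 'a::comm_ring_1 fps fps) (c + m) a' = (if a' < a then 0 else if a' = a then 1 else cf (Wv (Suc m) s a c) (c + m) a')"
proof -
  have "fps_nth (Wv (Suc m) s a c :: 'a fps fps) (c + m) = fps_X^a * (1+fps_X)^m"
    unfolding Wv_nth by (simp add: Bp_top)
  thus ?thesis by (auto simp: fps_X_power_mult_nth fps_nth_power_0)
qed

lemma Uf_minus_Xf: "Uf - Xf = fps_X * (1 + Xf)"
  unfolding Uf_def by (simp add: algebra_simps)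

lemma Wv_kernel: assumes r: "1 \<le> r" "r \<le> s"
  shows "boxeq r s (Uf^(s-r+1) * Wv r s a c :: 'a::comm_ring_1 fps fps) 0"
proof -
  define R :: "'a fps fps" where "R = (\<Sum>k\<in>{r..s}. of_nat (s choose k) * (-1)^k * Xf^(k-r) * Uf^(s-k))"
  have "((Uf :: 'a fps fps) - Xf)^s = (-Xf + Uf)^s" by simp
  also have "\<dots> = (\<Sum>k\<le>s. of_nat (s choose k) * (-Xf)^k * (Uf :: 'a fps fps)^(s-k))" by (rule binomial_ring)
  also have "{..s} = {..<r} \<union> {r..s}" using r by auto
  also have "(\<Sum>k\<in>{..<r} \<union> {r..s}. of_nat (s choose k) * (-Xf)^k * (Uf :: 'a fps fps)^(s-k)) =
     (\<Sum>k<r. of_nat (s choose k) * (-Xf)^k * (Uf :: 'a fps fps)^(s-k)) + (\<Sum>k\<in>{r..s}. of_nat (s choose k) * (-Xf)^k * Uf^(s-k))"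
    by (rule sum.union_disjoint, auto)
  also have "(\<Sum>k<r. of_nat (s choose k) * (-Xf)^k * (Uf :: 'a fps fps)^(s-k)) = Uf^(s-r+1) * Bp r s"
    unfolding Bp_def sum_distrib_left
  proof (rule sum.cong[OF refl])
    fix k assume "k \<in> {..<r}"
    hence "s - k = (s-r+1) + (r-1-k)" using r by auto
    hence "(Uf :: 'a fps fps)^(s-k) = Uf^(s-r+1) * Uf^(r-1-k)" by (metis power_add)
    thus "of_nat (s choose k) * (-Xf)^k * (Uf :: 'a fps fps)^(s-k) = Uf^(s-r+1) * (of_nat (s choose k) * (-Xf)^k * Uf^(r-1-k))"
      by (simp add: algebra_simps)
  qed
  also have "(\<Sum>k\<in>{r..s}. of_nat (s choose k) * (-Xf)^k * (Uf :: 'a fps fps)^(s-k)) = Xf^r * R"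
    unfolding R_def sum_distrib_left
  proof (rule sum.cong[OF refl])
    fix k assume "k \<in> {r..s}"
    hence "k = r + (k - r)" by auto
    hence "(-Xf)^k = (-1)^k * ((Xf :: 'a fps fps)^r * Xf^(k-r))" by (metis power_add power_minus)
    thus "of_nat (s choose k) * (-Xf)^k * (Uf :: 'a fps fps)^(s-k) = Xf^r * (of_nat (s choose k) * (-1)^k * Xf^(k-r) * Uf^(s-k))"
      by (simp add: algebra_simps)
  qed
  finally have e1: "((Uf :: 'a fps fps) - Xf)^s = Uf^(s-r+1) * Bp r s + Xf^r * R" .
  have e2: "((Uf :: 'a fps fps) - Xf)^s = fps_X^s * (1 + Xf)^s"
    unfolding Uf_minus_Xf by (rule power_mult_distrib)
  have eq: "(Uf :: 'a fps fps)^(s-r+1) * Bp r s = fps_X^s * (1 + Xf)^s - Xf^r * R"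
    using e1 e2 by (metis add_diff_cancel)
  have "(Uf :: 'a fps fps)^(s-r+1) * Wv r s a c = (Uf^(s-r+1) * Bp r s) * (Xf^a * fps_X^c)"
    unfolding Wv_def by (simp only: mult.assoc)
  also have "\<dots> = fps_X^s * ((1 + Xf)^s * (Xf^a * fps_X^c)) - Xf^r * (R * (Xf^a * fps_X^c))"
    unfolding eq left_diff_distrib by (simp only: mult.assoc)
  finally   have "(Uf :: 'a fps fps)^(s-r+1) * Wv r s a c = fps_X^s * ((1 + Xf)^s * (Xf^a * fps_X^c)) - Xf^r * (R * (Xf^a * fps_X^c))" .
  thus ?thesis using box_diff[OF box_Y box_X] by simp
qed

lemma ker1_det: assumes k: "boxeq r s (Uf * P) 0" and s: "1 \<le> s"
  and top: "\<And>a. a < r \<Longrightarrow> cf P (s-1) a = 0"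
  shows "a < r \<Longrightarrow> b < s \<Longrightarrow> cf P b a = 0"
proof (induction a arbitrary: b)
  case 0
  show ?case
  proof (cases "b = s - 1")
    case True thus ?thesis using top 0 by auto
  next
    case False
    hence "Suc b < s" using 0 by auto
    from k[unfolded boxeq_def, rule_format, OF 0(1) this] show ?thesis by (simp add: Uf_nth)
  qed
next
  case (Suc a)
  show ?case
  proof (cases "b = s - 1")
    case True thus ?thesis using top Suc by auto
  next
    case False
    hence "Suc b < s" using Suc by auto
    from k[unfolded boxeq_def, rule_format, OF Suc(2) this] Suc.IH[of b] Suc.IH[of "Suc b"] Suc(2,3) this
    show ?thesis by (simp add: Uf_nth)
  qed
qed


definition pv :: "nat \<Rightarrow> nat \<Rightarrow> 'a::comm_ring_1 vec \<Rightarrow> 'a fps fps" where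
  "pv r s v = Abs_fps (\<lambda>b. Abs_fps (\<lambda>a. if a < r \<and> b < s then v $ ((r-1-a)*s + (s-1-b)) else 0))"

definition vp :: "nat \<Rightarrow> nat \<Rightarrow> 'a::comm_ring_1 fps fps \<Rightarrow> 'a vec" where
  "vp r s P = vec (r*s) (\<lambda>p. cf P (s - 1 - p mod s) (r - 1 - p div s))"

lemma cf_pv: "cf (pv r s v) b a = (if a < r \<and> b < s then v $ ((r-1-a)*s + (s-1-b)) else 0)"
  unfolding pv_def by simp

lemma idx_lt: "a < r \<Longrightarrow> b < (s::nat) \<Longrightarrow> (r-1-a)*s + (s-1-b) < r*s"
proof -
  assume a: "a < r" and b: "b < s"
  have "(r-1-a)*s + (s-1-b) < (r-1-a)*s + s" using b by auto
  also have "\<dots> = (r-a)*s" using a by (cases "r - a", auto)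
  also have "\<dots> \<le> r*s" by auto
  finally show ?thesis .
qed

lemma divmod_help: "x < (s::nat) \<Longrightarrow> (k*s + x) div s = k \<and> (k*s + x) mod s = x"
  by (metis add.commute div_less div_mult_self1 mod_less mod_mult_self2 add_0 less_nat_zero_code mult.commute)

lemma vp_pv: assumes v: "v \<in> carrier_vec (r*s)" shows "vp r s (pv r s v) = v"
proof (rule eq_vecI)
  show "dim_vec (vp r s (pv r s v)) = dim_vec v" using v unfolding vp_def by auto
  fix p assume "p < dim_vec v"
  hence p: "p < r*s" using v by auto
  hence s: "0 < s" by (cases s, auto)
  have i: "p div s < r" using p by (simp add: less_mult_imp_div_less)
  have j: "p mod s < s" using s by auto
  have "(r - 1 - (r - 1 - p div s)) * s + (s - 1 - (s - 1 - p mod s)) = p div s * s + p mod s"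
    using i j by auto
  also have "\<dots> = p" by simp
  finally show "vp r s (pv r s v) $ p = v $ p" unfolding vp_def cf_pv using p i j by auto
qed

lemma vp_box: assumes "boxeq r s P Q" shows "vp r s P = vp r s Q"
proof (rule eq_vecI)
  fix p assume "p < dim_vec (vp r s Q)"
  hence p: "p < r*s" unfolding vp_def by auto
  hence s: "0 < s" by (cases s, auto)
  have i: "p div s < r" using p by (simp add: less_mult_imp_div_less)
  show "vp r s P $ p = vp r s Q $ p" unfolding vp_def using p assms[unfolded boxeq_def] s i by auto
qed (auto simp: vp_def)

lemma pv_vp_box: "boxeq r s (pv r s (vp r s P)) P"
  unfolding boxeq_def
proof (intro allI impI)
  fix a b assume a: "a < r" and b: "b < s"
  let ?p = "(r-1-a)*s + (s-1-b)"
  have p: "?p < r*s" by (rule idx_lt[OF a b])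
  have "s - 1 - b < s" using b by auto
  from divmod_help[OF this, of "r-1-a"] have "?p div s = r - 1 - a" "?p mod s = s - 1 - b" by auto
  thus "cf (pv r s (vp r s P)) b a = cf P b a" unfolding cf_pv vp_def using a b p by auto
qed

lemma vp_zero: "vp r s 0 = 0\<^sub>v (r*s)" unfolding vp_def by auto

lemma J_carrier: "J n \<in> carrier_mat n n" unfolding J_def by simp

lemma J_index: "i < n \<Longrightarrow> j < n \<Longrightarrow> (J n :: 'a::{zero,one} mat) $$ (i,j) = (if i = j then 1 else if Suc i = j then 1 else 0)"
  unfolding J_def by simp

lemma Jrow: assumes j: "j < n"
  shows "(\<Sum>j'<n. (J n :: 'a::comm_ring_1 mat) $$ (j,j') * w j') = w j + (if Suc j < n then w (Suc j) else 0)"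
proof -
  have "(\<Sum>j'<n. (J n :: 'a mat) $$ (j,j') * w j') = (\<Sum>j'<n. (if j' = j then w j' else 0) + (if j' = Suc j then w j' else 0))"
    by (rule sum.cong, insert j, auto simp: J_index)
  also have "\<dots> = (\<Sum>j'<n. (if j' = j then w j' else 0)) + (\<Sum>j'<n. (if j' = Suc j then w j' else 0))"
    by (rule sum.distrib)
  finally show ?thesis using j by (simp add: sum.delta)
qed

lemma sum_group: "(\<Sum>q<r*s. f q) = (\<Sum>i<r. \<Sum>j<(s::nat). f (i*s + j))"
proof -
  have "(\<Sum>q<r*s. f q) = (\<Sum>i<r. \<Sum>q\<in>{i*s..<i*s+s}. f q)" by (rule sum.nat_group[symmetric])
  also have "\<dots> = (\<Sum>i<r. \<Sum>j<s. f (i*s + j))"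
  proof (rule sum.cong[OF refl])
    fix i
    have "(\<Sum>q\<in>{i*s..<i*s+s}. f q) = (\<Sum>q\<in>{0 + i*s..<s + i*s}. f q)" by (simp add: add.commute)
    also have "\<dots> = (\<Sum>j\<in>{0..<s}. f (j + i*s))" by (rule sum.shift_bounds_nat_ivl)
    finally show "(\<Sum>q\<in>{i*s..<i*s+s}. f q) = (\<Sum>j<s. f (i*s + j))" by (simp add: atLeast0LessThan add.commute)
  qed
  finally show ?thesis .
qed

lemma kron_mult: assumes v: "v \<in> carrier_vec (r*s)" and i: "i < r" and j: "j < s"
  shows "((kron_mat (J r) (J s) *\<^sub>v v) $ (i*s+j) :: 'a::comm_ring_1) =
    v $ (i*s+j) + (if Suc j < s then v $ (i*s+Suc j) else 0) + 
    (if Suc i < r then v $ (Suc i*s+j) + (if Suc j < s then v $ (Suc i*s+Suc j) else 0) else 0)"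
proof -
  let ?A = "kron_mat (J r) (J s) :: 'a mat"
  have Jr: "(J r :: 'a mat) \<in> carrier_mat r r" and Js: "(J s :: 'a mat) \<in> carrier_mat s s" by (rule J_carrier)+
  have dims: "dim_row ?A = r*s" "dim_col ?A = r*s" unfolding kron_mat_def using Jr Js by auto
  have p: "i*s+j < r*s" using idx_lt[of "r-1-i" r "s-1-j" s] i j by auto
  have dr: "dim_row (J s :: 'a mat) = s" "dim_col (J s :: 'a mat) = s" using Js by auto
  have ent: "?A $$ (i*s+j, i'*s+j') = (J r) $$ (i,i') * (J s) $$ (j,j')" if "i' < r" "j' < s" for i' j'
  proof -
    have q: "i'*s+j' < r*s" using idx_lt[of "r-1-i'" r "s-1-j'" s] that by auto
    from divmod_help[OF j, of i] divmod_help[OF that(2), of i'] p q show ?thesis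
      unfolding kron_mat_def dr using Jr Js by auto
  qed
  have "(?A *\<^sub>v v) $ (i*s+j) = (\<Sum>q<r*s. ?A $$ (i*s+j, q) * v $ q)"
    using p dims v by (auto simp: scalar_prod_def atLeast0LessThan intro!: sum.cong)
  also have "\<dots> = (\<Sum>i'<r. \<Sum>j'<s. ?A $$ (i*s+j, i'*s+j') * v $ (i'*s+j'))" by (rule sum_group)
  also have "\<dots> = (\<Sum>i'<r. (J r) $$ (i,i') * (\<Sum>j'<s. (J s) $$ (j,j') * v $ (i'*s+j')))"
    by (auto simp: ent sum_distrib_left mult.assoc intro!: sum.cong)
  also have "\<dots> = (\<Sum>i'<r. (J r) $$ (i,i') * (v $ (i'*s+j) + (if Suc j < s then v $ (i'*s+Suc j) else 0)))"
    by (rule sum.cong[OF refl], subst Jrow[OF j], auto)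
  also have "\<dots> = v $ (i*s+j) + (if Suc j < s then v $ (i*s+Suc j) else 0) + 
    (if Suc i < r then v $ (Suc i*s+j) + (if Suc j < s then v $ (Suc i*s+Suc j) else 0) else 0)"
    by (subst Jrow[OF i], simp)
  finally show ?thesis .
qed

lemma char_mult: assumes A: "A \<in> carrier_mat n n" and v: "v \<in> carrier_vec n" and p: "p < n"
  shows "(char_matrix A (1::'a::field) *\<^sub>v v) $ p = (A *\<^sub>v v) $ p - v $ p"
proof -
  have "(char_matrix A 1 *\<^sub>v v) $ p = (\<Sum>q\<in>{0..<n}. (A $$ (p,q) - (if p = q then 1 else 0)) * v $ q)"
    using A v p unfolding char_matrix_def by (auto simp: scalar_prod_def intro!: sum.cong)
  also have "\<dots> = (\<Sum>q\<in>{0..<n}. A $$ (p,q) * v $ q - (if p = q then v $ q else 0))"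
    by (rule sum.cong, auto simp: algebra_simps)
  also have "\<dots> = (\<Sum>q\<in>{0..<n}. A $$ (p,q) * v $ q) - (\<Sum>q\<in>{0..<n}. (if p = q then v $ q else 0))"
    by (rule sum_subtractf)
  also have "\<dots> = (A *\<^sub>v v) $ p - v $ p" using A v p by (auto simp: scalar_prod_def)
  finally show ?thesis .
qed

definition Mm :: "nat \<Rightarrow> nat \<Rightarrow> 'a::field mat" where
  "Mm r s = char_matrix (kron_mat (J r) (J s)) 1"

lemma kron_carrier: "(kron_mat (J r) (J s) :: 'a::comm_ring_1 mat) \<in> carrier_mat (r*s) (r*s)"
proof -
  have Jr: "(J r :: 'a mat) \<in> carrier_mat r r" and Js: "(J s :: 'a mat) \<in> carrier_mat s s" by (rule J_carrier)+
  thus ?thesis unfolding kron_mat_def by auto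
qed

lemma Mm_carrier: "Mm r s \<in> carrier_mat (r*s) (r*s)"
  unfolding Mm_def by (rule char_matrix_closed[OF kron_carrier])

lemma M_mult: assumes v: "v \<in> carrier_vec (r*s)"
  shows "Mm r s *\<^sub>v v = vp r s (Uf * pv r s (v :: 'a::field vec))"
proof (rule eq_vecI)
  show "dim_vec (Mm r s *\<^sub>v v) = dim_vec (vp r s (Uf * pv r s v))" using Mm_carrier[of r s] unfolding vp_def by auto
  fix p assume "p < dim_vec (vp r s (Uf * pv r s v))"
  hence p: "p < r*s" unfolding vp_def by auto
  hence s: "0 < s" by (cases s, auto)
  define i where "i = p div s"
  define j where "j = p mod s"
  have i: "i < r" using p unfolding i_def by (simp add: less_mult_imp_div_less)
  have j: "j < s" using s unfolding j_def by auto
  have pij: "p = i*s + j" unfolding i_def j_def by simp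
  have "(Mm r s *\<^sub>v v) $ p = (kron_mat (J r) (J s) *\<^sub>v v) $ (i*s+j) - v $ (i*s+j)"
    unfolding Mm_def pij by (rule char_mult[OF kron_carrier v], insert p pij, auto)
  also have "\<dots> = (if Suc j < s then v $ (i*s+Suc j) else 0) + 
    (if Suc i < r then v $ (Suc i*s+j) + (if Suc j < s then v $ (Suc i*s+Suc j) else 0) else 0)"
    unfolding kron_mult[OF v i j] by simp
  also have "\<dots> = vp r s (Uf * pv r s v) $ p"
  proof -
    have dm: "(i*s+j) div s = i" "(i*s+j) mod s = j" using divmod_help[OF j, of i] by auto
    have pp: "i*s+j < r*s" using p pij by simp
    have e1: "r - 1 - (r - 1 - i - 1) = Suc i" if "Suc i < r" using that by auto
    have e2: "s - 1 - (s - 1 - j - 1) = Suc j" if "Suc j < s" using that by auto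
    show ?thesis
    proof (cases "Suc j < s")
      case True
      thus ?thesis unfolding vp_def pij Uf_nth cf_pv using pp dm i j e1 e2
        by (auto simp: algebra_simps)
    next
      case False
      hence e3: "s = Suc j" using j by auto
      have e4: "s + (s + i * s) - Suc 0 = j + (s + i * s)" using e3 by simp
      show ?thesis unfolding vp_def pij Uf_nth cf_pv using pp dm i j e1 e2 False e4
        by (auto simp: algebra_simps)
    qed
  qed
  finally show "(Mm r s *\<^sub>v v) $ p = vp r s (Uf * pv r s v) $ p" .
qed

lemma M_pow: assumes v: "v \<in> carrier_vec (r*s)"
  shows "(Mm r s ^\<^sub>m k) *\<^sub>v v = vp r s (Uf^k * pv r s (v :: 'a::field vec))"
  using v
proof (induction k arbitrary: v)
  case 0
  have "dim_row (Mm r s :: 'a mat) = r*s" using Mm_carrier[of r s] by auto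
  thus ?case using 0 by (simp add: vp_pv)
next
  case (Suc k)
  have M: "(Mm r s :: 'a mat) \<in> carrier_mat (r*s) (r*s)" by (rule Mm_carrier)
  have Mv: "Mm r s *\<^sub>v v \<in> carrier_vec (r*s)" using M Suc(2) by auto
  have "(Mm r s ^\<^sub>m Suc k) *\<^sub>v v = (Mm r s ^\<^sub>m k) *\<^sub>v (Mm r s *\<^sub>v v)"
    using M Suc(2) by (simp add: assoc_mult_mat_vec[of _ "r*s" "r*s" _ "r*s"])
  also have "\<dots> = vp r s (Uf^k * pv r s (Mm r s *\<^sub>v v))" by (rule Suc.IH[OF Mv])
  also have "\<dots> = vp r s (Uf^k * pv r s (vp r s (Uf * pv r s v)))"
    unfolding M_mult[OF Suc(2)] ..
  also have "\<dots> = vp r s (Uf^k * (Uf * pv r s v))"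
    by (rule vp_box, rule box_mult, rule pv_vp_box)
  also have "\<dots> = vp r s (Uf^Suc k * pv r s v)" by (simp only: mult.assoc[symmetric] power_Suc2)
  finally show ?case .
qed

lemma box0_vp: "boxeq r s P 0 \<Longrightarrow> vp r s P = 0\<^sub>v (r*s)"
  using vp_box[of r s P 0] vp_zero by simp

lemma vp0_box: assumes "vp r s P = 0\<^sub>v (r*s)" shows "boxeq r s P 0"
proof -
  have "boxeq r s (pv r s (vp r s P)) P" by (rule pv_vp_box)
  moreover have "boxeq r s (pv r s (0\<^sub>v (r*s))) 0" unfolding boxeq_def cf_pv using idx_lt by auto
  ultimately show ?thesis using assms by (metis box_sym box_trans)
qed


lemma Mpow_carrier: "(Mm r s ^\<^sub>m k :: 'a::field mat) \<in> carrier_mat (r*s) (r*s)"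
  using Mm_carrier by (rule pow_carrier_mat)

lemma F1: assumes "1 \<le> r" "1 \<le> s"
  shows "r*s \<le> kernel_dim (Mm r s ^\<^sub>m (r+s-1) :: 'a::field mat)"
proof -
  have "card {..<r*s} \<le> kernel_dim (Mm r s ^\<^sub>m (r+s-1) :: 'a::field mat)"
  proof (rule kernel_dim_ge[OF Mpow_carrier, where w = "\<lambda>k. unit_vec (r*s) k"])
    fix k assume k: "k \<in> {..<r*s}"
    have "(Mm r s ^\<^sub>m (r+s-1) :: 'a mat) *\<^sub>v unit_vec (r*s) k = vp r s (Uf^(r+s-1) * pv r s (unit_vec (r*s) k))"
      by (rule M_pow, auto)
    also have "\<dots> = 0\<^sub>v (r*s)" by (rule box0_vp, rule Uf_nilp[OF assms])
    finally show "unit_vec (r*s) k \<in> carrier_vec (r*s) \<and> (Mm r s ^\<^sub>m (r+s-1) :: 'a mat) *\<^sub>v unit_vec (r*s) k = 0\<^sub>v (r*s)"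
      by auto
  next
    show "inj_on (\<lambda>k. unit_vec (r*s) k :: 'a vec) {..<r*s}"
    proof
      fix x y assume "x \<in> {..<r*s}" "y \<in> {..<r*s}" "(unit_vec (r*s) x :: 'a vec) = unit_vec (r*s) y"
      from arg_cong[OF this(3), of "\<lambda>v. v $ x"] this(1,2) show "x = y" by (auto split: if_splits)
    qed
  next
    fix c :: "nat \<Rightarrow> 'a" assume h: "\<And>i. i < r*s \<Longrightarrow> (\<Sum>k\<in>{..<r*s}. c k * unit_vec (r*s) k $ i) = 0"
    show "\<forall>k\<in>{..<r*s}. c k = 0"
    proof
      fix k assume k: "k \<in> {..<r*s}"
      have "(\<Sum>j\<in>{..<r*s}. c j * unit_vec (r*s) j $ k) = (\<Sum>j\<in>{..<r*s}. if j = k then c j else 0)"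
        using k by (intro sum.cong, auto)
      also have "\<dots> = c k" using k by simp
      finally show "c k = 0" using h[of k] k by auto
    qed
  qed auto
  thus ?thesis by simp
qed

lemma F2: assumes "1 \<le> r" "1 \<le> s"
  shows "kernel_dim (Mm r s :: 'a::field mat) \<le> r"
proof (rule kernel_dim_le[OF Mm_carrier, where \<sigma> = "\<lambda>i. i * s"])
  fix i assume "i < r" 
  thus "i * s < r * s" using assms by auto
next
  fix v :: "'a vec" assume v: "v \<in> carrier_vec (r*s)" and Mv: "Mm r s *\<^sub>v v = 0\<^sub>v (r*s)"
    and top: "\<And>i. i < r \<Longrightarrow> v $ (i * s) = 0"
  have k: "boxeq r s (Uf * pv r s v) 0" using Mv unfolding M_mult[OF v] by (rule vp0_box)
  have "boxeq r s (pv r s v) 0" unfolding boxeq_def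
  proof (intro allI impI)
    fix a b assume a: "a < r" and b: "b < s"
    show "cf (pv r s v) b a = cf 0 b a"
      using ker1_det[OF k assms(2), of a b] a b top unfolding cf_pv by auto
  qed
  hence "vp r s (pv r s v) = 0\<^sub>v (r*s)" by (rule box0_vp)
  thus "v = 0\<^sub>v (r*s)" unfolding vp_pv[OF v] .
qed

lemma tri_li:
  fixes f :: "'k \<Rightarrow> 'i \<Rightarrow> 'a::field"
  assumes fin: "finite K" and inj: "inj_on key K"
  and one: "\<And>k. k \<in> K \<Longrightarrow> f k (piv k) = 1"
  and zero: "\<And>k l. k \<in> K \<Longrightarrow> l \<in> K \<Longrightarrow> key l < (key k :: nat) \<Longrightarrow> f l (piv k) = 0"
  and sums: "\<And>k. k \<in> K \<Longrightarrow> (\<Sum>l\<in>K. c l * f l (piv k)) = 0"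
  shows "\<forall>k\<in>K. c k = 0"
proof (rule ccontr)
  assume nt: "\<not> (\<forall>k\<in>K. c k = 0)"
  define S where "S = {k\<in>K. c k \<noteq> 0}"
  have S: "finite S" "S \<noteq> {}" "S \<subseteq> K" using fin nt unfolding S_def by auto
  define m where "m = Max (key ` S)"
  have "m \<in> key ` S" unfolding m_def using S by auto
  then obtain k where kS: "k \<in> S" and km: "key k = m" by auto
  have le: "key l \<le> key k" if "l \<in> S" for l using S that unfolding km m_def by auto
  have "(\<Sum>l\<in>K. c l * f l (piv k)) = (\<Sum>l\<in>{k}. c l * f l (piv k))"
  proof (rule sum.mono_neutral_right[OF fin])
    show "{k} \<subseteq> K" using kS S by auto
    show "\<forall>l\<in>K - {k}. c l * f l (piv k) = 0"
    proof
      fix l assume l: "l \<in> K - {k}"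
      show "c l * f l (piv k) = 0"
      proof (cases "l \<in> S")
        case True
        with le have "key l \<le> key k" by auto
        moreover have "key l \<noteq> key k" using inj l kS S unfolding inj_on_def by auto
        ultimately have "key l < key k" by auto
        thus ?thesis using zero[of k l] l kS S by auto
      next
        case False thus ?thesis using l unfolding S_def by auto
      qed
    qed
  qed
  also have "\<dots> = c k" using one[of k] kS S by auto
  finally have "c k = 0" using sums[of k] kS S by auto
  thus False using kS unfolding S_def by auto
qed

lemma key_cases: assumes "c' * r + (r - 1 - a') < c * r + (r - 1 - (a::nat))" "a < r" "a' < r"
  shows "c' < c \<or> (c' = c \<and> a < a')"
proof (rule ccontr)
  assume "\<not> ?thesis"
  hence "c \<le> c'" "c' = c \<longrightarrow> a' \<le> a" by auto
  show False
  proof (cases "c = c'")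
    case True thus ?thesis using assms \<open>c' = c \<longrightarrow> a' \<le> a\<close> by auto
  next
    case False
    hence "Suc c \<le> c'" using \<open>c \<le> c'\<close> by auto
    hence "Suc c * r \<le> c' * r" by (rule mult_le_mono1)
    thus ?thesis using assms by auto
  qed
qed

lemma F3: assumes r: "1 \<le> r" "r \<le> s"
  shows "r * (s-r+1) \<le> kernel_dim (Mm r s ^\<^sub>m (s-r+1) :: 'a::field mat)"
proof -
  define J where "J = s - r + 1"
  define K where "K = {..<r} \<times> {..<J}"
  define w where "w k = (vp r s (Wv r s (fst k) (snd k)) :: 'a vec)" for k
  define piv where "piv k = (r - 1 - fst k) * s + (s - 1 - (snd k + (r - 1)))" for k :: "nat \<times> nat"
  define key where "key k = snd k * r + (r - 1 - fst k)" for k :: "nat \<times> nat"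
  have finK: "finite K" unfolding K_def by auto
  have cardK: "card K = r * J" unfolding K_def by (simp add: card_cartesian_product)
  have wpiv: "w l $ piv k = cf (Wv r s (fst l) (snd l) :: 'a fps fps) (snd k + (r - 1)) (fst k)" if "k \<in> K" for k l
  proof -
    have a: "fst k < r" and b: "snd k + (r-1) < s" using that r unfolding K_def J_def by auto
    have p: "piv k < r * s" unfolding piv_def by (rule idx_lt[OF a b])
    have "s - 1 - (snd k + (r - 1)) < s" using b by auto
    from divmod_help[OF this, of "r - 1 - fst k"]
    have "piv k div s = r - 1 - fst k" "piv k mod s = s - 1 - (snd k + (r - 1))" unfolding piv_def by auto
    thus ?thesis unfolding w_def vp_def using p a b by auto
  qed
  have rm: "r = Suc (r - 1)" using r by auto
  have one: "w k $ piv k = 1" if "k \<in> K" for k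
  proof -
    have "cf (Wv (Suc (r-1)) s (fst k) (snd k) :: 'a fps fps) (snd k + (r - 1)) (fst k) = 1"
      using Wv_top[of "r-1" s "fst k" "snd k" "fst k"] by simp
    thus ?thesis unfolding wpiv[OF that] using rm by metis
  qed
  have zero: "w l $ piv k = 0" if "k \<in> K" "l \<in> K" "key l < key k" for k l
  proof -
    have ak: "fst k < r" and al: "fst l < r" using that unfolding K_def by auto
    from key_cases[OF that(3)[unfolded key_def] ak al]
    have "snd l < snd k \<or> (snd l = snd k \<and> fst k < fst l)" .
    thus ?thesis
    proof
      assume "snd l < snd k"
      hence "snd k + (r-1) > snd l + (r-1)" by auto
      thus ?thesis unfolding wpiv[OF that(1)] by (rule Wv_hi)
    next
      assume h: "snd l = snd k \<and> fst k < fst l"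
      have "cf (Wv (Suc (r-1)) s (fst l) (snd l) :: 'a fps fps) (snd l + (r - 1)) (fst k) = 0"
        using Wv_top[of "r-1" s "fst l" "snd l" "fst k"] h by simp
      thus ?thesis unfolding wpiv[OF that(1)] using rm h by metis
    qed
  qed
  have injkey: "inj_on key K"
  proof
    fix x y assume x: "x \<in> K" and y: "y \<in> K" and e: "key x = key y"
    have "r - 1 - fst x < r" "r - 1 - fst y < r" using r by auto
    from divmod_help[OF this(1), of "snd x"] divmod_help[OF this(2), of "snd y"] e
    have "snd x = snd y" "r - 1 - fst x = r - 1 - fst y" unfolding key_def by metis+
    moreover have "fst x < r" "fst y < r" using x y unfolding K_def by auto
    ultimately show "x = y" by (simp add: prod_eq_iff)
  qed
  have "card K \<le> kernel_dim (Mm r s ^\<^sub>m J :: 'a::field mat)"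
  proof (rule kernel_dim_ge[OF Mpow_carrier, where w = w, OF _ finK])
    fix k assume k: "k \<in> K"
    have "(Mm r s ^\<^sub>m J :: 'a mat) *\<^sub>v w k = vp r s (Uf^J * pv r s (w k))"
      by (rule M_pow, auto simp: w_def vp_def)
    also have "\<dots> = vp r s (Uf^J * Wv r s (fst k) (snd k))"
      unfolding w_def by (rule vp_box, rule box_mult, rule pv_vp_box)
    also have "\<dots> = 0\<^sub>v (r*s)" unfolding J_def by (rule box0_vp, rule Wv_kernel[OF r])
    finally show "w k \<in> carrier_vec (r*s) \<and> (Mm r s ^\<^sub>m J :: 'a mat) *\<^sub>v w k = 0\<^sub>v (r*s)"
      by (auto simp: w_def vp_def)
  next
    show "inj_on w K"
    proof
      fix x y assume x: "x \<in> K" and y: "y \<in> K" and e: "w x = w y"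
      show "x = y"
      proof (rule ccontr)
        assume ne: "x \<noteq> y"
        hence "key x \<noteq> key y" using injkey x y unfolding inj_on_def by auto
        hence "key x < key y \<or> key y < key x" by auto
        thus False
        proof
          assume "key x < key y"
          from zero[OF y x this] one[OF y] e show False by auto
        next
          assume "key y < key x"
          from zero[OF x y this] one[OF x] e show False by auto
        qed
      qed
    qed
  next
    fix c :: "nat \<times> nat \<Rightarrow> 'a" assume h: "\<And>i. i < r*s \<Longrightarrow> (\<Sum>k\<in>K. c k * w k $ i) = 0"
    show "\<forall>k\<in>K. c k = 0"
    proof (rule tri_li[OF finK injkey, where f = "\<lambda>k i. w k $ i" and piv = piv])
      fix k assume k: "k \<in> K"
      have a: "fst k < r" and b: "snd k + (r-1) < s" using k r unfolding K_def J_def by auto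
      have "piv k < r * s" unfolding piv_def by (rule idx_lt[OF a b])
      thus "(\<Sum>l\<in>K. c l * w l $ piv k) = 0" by (rule h)
    qed (insert one zero, auto)
  qed
  thus ?thesis unfolding cardK J_def .
qed


lemma sum_list_filter_min:
  "(\<Sum> n \<leftarrow> map fst [(n, e)\<leftarrow>L . e = ev]. min k n) = sum_list (map (\<lambda>(n,e). if e = ev then min k n else 0) L)"
  by (induction L, auto)

lemma sum_list_eq: assumes "\<And>x. x \<in> set L \<Longrightarrow> g x \<le> (h x :: nat)"
  and "sum_list (map h L) \<le> sum_list (map g L)"
  shows "x \<in> set L \<Longrightarrow> g x = h x"
  using assms
proof (induction L)
  case (Cons y L)
  have "sum_list (map g L) \<le> sum_list (map h L)" using Cons.prems(2) by (intro sum_list_mono, auto)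
  moreover have "g y \<le> h y" using Cons.prems(2) by auto
  ultimately have "g y = h y" "sum_list (map h L) \<le> sum_list (map g L)" using Cons.prems(3) by auto
  thus ?case using Cons by auto
qed simp

theorem lemma12:
  fixes p r s :: nat and n_as :: "(nat \<times> 'a :: field) list"
  assumes "prime p" and "CHAR('a) = p"
    and "1 \<le> r" and "r \<le> s"
    and "jordan_nf (kron_mat (J r) (J s) :: 'a mat) n_as"
  shows "\<forall>(k, ev) \<in> set n_as. \<bar>int k - int s\<bar> \<le> int r - 1"
proof -
  define A where "A = (kron_mat (J r) (J s) :: 'a mat)"
  have jnf: "jordan_nf A n_as" using assms(5) unfolding A_def .
  have r: "1 \<le> r" "r \<le> s" using assms by auto
  have s: "1 \<le> s" using r by auto
  define g where "g k = (\<lambda>(n::nat,e::'a). if e = 1 then min k n else 0)" for k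
  have D: "kernel_dim (Mm r s ^\<^sub>m k :: 'a mat) = sum_list (map (g k) n_as)" for k
    using dim_gen_eigenspace[OF jnf, of 1 k] unfolding dim_gen_eigenspace_def Mm_def A_def
      sum_list_filter_min g_def .
  have pos: "0 < n" if "(n,e) \<in> set n_as" for n e using jnf that unfolding jordan_nf_def by force
  have total: "sum_list (map fst n_as) = r*s"
  proof -
    from jnf have "similar_mat A (jordan_matrix n_as)" unfolding jordan_nf_def by auto
    from similar_matD[OF this] obtain n where "A \<in> carrier_mat n n" "jordan_matrix n_as \<in> carrier_mat n n" by auto
    moreover have "A \<in> carrier_mat (r*s) (r*s)" unfolding A_def by (rule kron_carrier)
    ultimately show ?thesis by (metis carrier_matD(1) jordan_matrix_dim(1))
  qed
  have st1: "g (r+s-1) x = fst x" if "x \<in> set n_as" for x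
  proof (rule sum_list_eq[OF _ _ that])
    fix y show "g (r+s-1) y \<le> fst y" unfolding g_def by (cases y, auto)
  next
    show "sum_list (map fst n_as) \<le> sum_list (map (g (r+s-1)) n_as)"
      using F1[OF r(1) s, where 'a='a] unfolding D total .
  qed
  have ev1: "e = 1" and up: "n \<le> r+s-1" if "(n,e) \<in> set n_as" for n e
    using st1[OF that] pos[OF that] unfolding g_def by (auto split: if_splits)
  have g1: "g 1 x = 1" if "x \<in> set n_as" for x
  proof -
    obtain n e where x: "x = (n,e)" by force
    show ?thesis using ev1[OF that[unfolded x]] pos[OF that[unfolded x]] unfolding x g_def by simp
  qed
  have "sum_list (map (g 1) n_as) = length n_as"
    using g1 by (induction n_as, auto)
  hence len: "length n_as \<le> r" using F2[OF r(1) s, where 'a='a] D[of 1] by simp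
  define J where "J = s - r + 1"
  have st3: "g J x = J" if "x \<in> set n_as" for x
  proof (rule sum_list_eq[OF _ _ that])
    fix y show "g J y \<le> J" unfolding g_def by (cases y, auto)
  next
    have "sum_list (map (\<lambda>_. J) n_as) = J * length n_as" by (induction n_as, auto)
    also have "\<dots> \<le> J * r" using len by auto
    also have "\<dots> \<le> sum_list (map (g J) n_as)"
      using F3[OF r, where 'a='a] unfolding D J_def by (simp add: mult.commute)
    finally show "sum_list (map (\<lambda>_. J) n_as) \<le> sum_list (map (g J) n_as)" .
  qed
  have low: "J \<le> n" if "(n,e) \<in> set n_as" for n e
    using st3[OF that] ev1[OF that] unfolding g_def by auto
  show ?thesis
  proof (intro ballI, clarify)
    fix k ev assume "(k, ev) \<in> set n_as"
    from low[OF this] up[OF this] r have "int s - int r + 1 \<le> int k" "int k \<le> int r + int s - 1"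
      unfolding J_def by linarith+
    thus "\<bar>int k - int s\<bar> \<le> int r - 1" by (simp add: abs_le_iff)
  qed
qed

end
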